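(* Let $d>1$ be an integer. (a) If $d$ is even, each even node of $\Gamma_d$ has exactly two outgoing black arrows and no outgoing red arrows, and each odd node has exactly two outgoing red arrows and no outgoing black arrows; if $d$ is odd, each node has exactly one outgoing red arrow and exactly one outgoing black arrow. (b) If $3\mid d$, each node congruent to $2\bmod 3$ has exactly one incoming black arrow and at least one incoming red arrow, and every other node has exactly one incoming black arrow and no incoming red arrow; if $3\nmid d$, every node has exactly one incoming black arrow and exactly one incoming red arrow. (c) If $\gcd(d,6)=1$, the black arrows partition the nodes into disjoint directed cycles, among which there is exactly one loop, at $0$, and all black cycles have length dividing the multiplicative order of $2$ mod $d$; likewise the red arrows partition the nodes into disjoint directed cycles, among which there is exactly one loop, at $d-1$, and all red cycles have length dividing the multiplicative order of $3/2$ mod $d$. (d) If $d=3^m$, the black arrows form a single directed cycle on the nodes relatively prime to $3$; for each $i=1,\dots,m-1$ they form a single directed cycle on the nodes divisible by $3^i$ but not $3^{i+1}$; and there is a black loop at $0$. (e) If $d=3^m$, the red arrows form a rooted tree with root $3^m-1$ and all arrows oriented toward the root, together with a red loop at the root; the leaves are the nodes not congruent to $2\bmod 3$, and the red path starting from any leaf first reaches the root after exactly $m$ steps.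
   Context: Let $T_0(x)=x/2$ and $T_1(x)=(3x+1)/2$. For a positive integer $d$, $\Gamma_d$ is the directed graph with vertex set $\mathbb{Z}/d\mathbb{Z}$ and two kinds of arrows: a black arrow $r\to s$ iff there exist positive integers $x\equiv r$, $y\equiv s\pmod d$ with $x$ even and $T_0(x)=y$; a red arrow $r\to s$ iff there exist positive integers $x\equiv r$, $y\equiv s\pmod d$ with $x$ odd and $T_1(x)=y$. *)

theory Defs
  imports Main "HOL-Number_Theory.Number_Theory"
begin

definition black_arrow :: "nat \<Rightarrow> nat \<Rightarrow> nat \<Rightarrow> bool" where
  "black_arrow d r s \<longleftrightarrow> r < d \<and> s < d \<and>
     (\<exists>x y::nat. x > 0 \<and> y > 0 \<and> x mod d = r \<and> y mod d = s \<and> even x \<and> 2 * y = x)"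

definition red_arrow :: "nat \<Rightarrow> nat \<Rightarrow> nat \<Rightarrow> bool" where
  "red_arrow d r s \<longleftrightarrow> r < d \<and> s < d \<and>
     (\<exists>x y::nat. x > 0 \<and> y > 0 \<and> x mod d = r \<and> y mod d = s \<and> odd x \<and> 2 * y = 3 * x + 1)"

definition cycle_len :: "(nat \<Rightarrow> nat) \<Rightarrow> nat \<Rightarrow> nat" where
  "cycle_len f r = (LEAST k. k > 0 \<and> (f ^^ k) r = r)"

text \<open>The arrows of relation R, restricted to the node set S, partition S into disjoint
  directed cycles, realised by the permutation f of S.\<close>
definition cycles_via :: "(nat \<Rightarrow> nat \<Rightarrow> bool) \<Rightarrow> nat set \<Rightarrow> (nat \<Rightarrow> nat) \<Rightarrow> bool" where
  "cycles_via R S f \<longleftrightarrow> bij_betw f S S \<and> (\<forall>r\<in>S. \<forall>s. R r s \<longleftrightarrow> s = f r)"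

definition single_cycle :: "(nat \<Rightarrow> nat \<Rightarrow> bool) \<Rightarrow> nat set \<Rightarrow> bool" where
  "single_cycle R S \<longleftrightarrow> S \<noteq> {} \<and> (\<exists>f. cycles_via R S f \<and>
      (\<forall>r\<in>S. \<forall>s\<in>S. \<exists>k. (f ^^ k) r = s))"

end

theory Submission
  imports Defs
begin

lemma black_iff:
  assumes "d > 0"
  shows "black_arrow d r s \<longleftrightarrow> r < d \<and> s < d \<and> (2*s) mod d = r"
proof
  assume "black_arrow d r s"
  then obtain x y :: nat where h: "r < d" "s < d" "x mod d = r" "y mod d = s" "2*y = x"
    unfolding black_arrow_def by blast
  then show "r < d \<and> s < d \<and> (2*s) mod d = r"
    by (metis mod_mult_right_eq)
next
  assume h: "r < d \<and> s < d \<and> (2*s) mod d = r"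
  let ?y = "s + d"
  have "?y mod d = s" using h by simp
  moreover have "(2 * ?y) mod d = r" using h by (simp add: algebra_simps)
  moreover have "2*?y > 0" "?y > 0" "even (2*?y)" using assms by auto
  ultimately show "black_arrow d r s" unfolding black_arrow_def using h
    by blast
qed

lemma red_iff:
  assumes "d > 0"
  shows "red_arrow d r s \<longleftrightarrow> r < d \<and> s < d \<and> (\<exists>x. odd x \<and> x mod d = r \<and> ((3*x+1) div 2) mod d = s)"
proof
  assume "red_arrow d r s"
  then obtain x y :: nat where h: "r < d" "s < d" "x mod d = r" "y mod d = s" "odd x" "2*y = 3*x+1"
    unfolding red_arrow_def by blast
  then have "y = (3*x+1) div 2" by simp
  then show "r < d \<and> s < d \<and> (\<exists>x. odd x \<and> x mod d = r \<and> ((3*x+1) div 2) mod d = s)"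
    using h by blast
next
  assume h: "r < d \<and> s < d \<and> (\<exists>x. odd x \<and> x mod d = r \<and> ((3*x+1) div 2) mod d = s)"
  then obtain x where x: "odd x" "x mod d = r" "((3*x+1) div 2) mod d = s" by blast
  let ?x = "x + 2*d"
  have e1: "odd ?x" using x by simp
  have e2: "?x mod d = r" using x by simp
  have e3: "(3*?x+1) div 2 = (3*x+1) div 2 + 3*d" by simp
  have e4: "((3*?x+1) div 2) mod d = s" using x e3 by simp
  have e5: "2 * ((3*?x+1) div 2) = 3*?x+1" using e1 by simp
  show "red_arrow d r s" unfolding red_arrow_def
  proof (intro conjI)
    show "r < d" "s < d" using h by auto
    have "?x > 0" "(3*?x+1) div 2 > 0" using assms by auto
    then show "\<exists>x y. 0 < x \<and> 0 < y \<and> x mod d = r \<and> y mod d = s \<and> odd x \<and> 2 * y = 3 * x + 1"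
      using e1 e2 e4 e5 by blast
  qed
qed

lemma modeq_int: "(a::nat) mod d = b mod d \<longleftrightarrow> int d dvd (int a - int b)"
  by (metis cong_def cong_iff_dvd_diff cong_int_iff)

lemma eq_mod_iff: "(s::nat) < d \<Longrightarrow> s = X mod d \<longleftrightarrow> int d dvd (int s - int X)"
  by (metis modeq_int mod_less)

lemma alg1: "2*(H::int) = D + 1 \<Longrightarrow> S - R*H = -S*D + H*(2*S - R)"
proof -
  assume a: "2*H = D+1"
  have "-S*D + H*(2*S - R) = S - R*H - S*(D+1) + (2*H)*S" by (simp add: algebra_simps)
  then show ?thesis using a by simp
qed
lemma alg2: "2*(H::int) = D + 1 \<Longrightarrow> 2*S - R = 2*(S - R*H) + R*D"
proof -
  assume a: "2*H = D+1"
  have "2*(S - R*H) + R*D = 2*S - R + R*(D+1) - R*(2*H)" by (simp add: algebra_simps)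
  then show ?thesis using a by simp
qed

lemma dvd_equiv: "(A::int) = -S*D + H*B \<Longrightarrow> B = 2*A + R*D \<Longrightarrow> (D dvd A \<longleftrightarrow> D dvd B)"
  by (metis dvd_add dvd_mult dvd_mult2 dvd_refl mult_minus_left dvd_minus_iff)

lemma two_h: "odd (d::nat) \<Longrightarrow> 2 * ((d+1) div 2) = d + 1"
  by presburger

lemma black_f:
  assumes "odd d" "d > 1"
  shows "black_arrow d r s \<longleftrightarrow> r < d \<and> s = (r*((d+1) div 2)) mod d"
proof -
  define h where "h = (d+1) div 2"
  have h2: "2 * int h = int d + 1" using two_h[OF assms(1)] h_def by linarith
  have "black_arrow d r s \<longleftrightarrow> r < d \<and> s < d \<and> int d dvd (2 * int s - int r)"
    using black_iff[of d r s] assms modeq_int[of "2*s" d r] by auto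
  also have "\<dots> \<longleftrightarrow> r < d \<and> s < d \<and> int d dvd (int s - int r * int h)"
  proof -
    have i1: "int s - int r * int h = - int s * int d + int h * (2 * int s - int r)"
      using alg1[OF h2] .
    have i2: "2 * int s - int r = 2 * (int s - int r * int h) + int r * int d"
      using alg2[OF h2] .
    show ?thesis using dvd_equiv[OF i1 i2] by blast
  qed
  also have "\<dots> \<longleftrightarrow> r < d \<and> s = (r*h) mod d"
    using eq_mod_iff[of s d "r*h"] assms by auto
  finally show ?thesis unfolding h_def .
qed

lemma red_iff_odd:
  assumes "odd d" "d > 1"
  shows "red_arrow d r s \<longleftrightarrow> r < d \<and> s < d \<and> int d dvd (2 * int s - 3 * int r - 1)"
proof
  assume "red_arrow d r s"
  then obtain x where x: "r < d" "s < d" "odd x" "x mod d = r" "((3*x+1) div 2) mod d = s"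
    using red_iff[of d r s] assms by auto
  define y where "y = (3*x+1) div 2"
  have y2: "int (2*y) = 3 * int x + 1" using x(3) y_def by simp
  have a: "int d dvd (int x - int r)" using modeq_int[of x d r] x by simp
  have b: "int d dvd (int y - int s)" using modeq_int[of y d s] x y_def by simp
  have "2 * int s - 3 * int r - 1 = 3 * (int x - int r) - 2 * (int y - int s)"
    using y2 by simp
  then show "r < d \<and> s < d \<and> int d dvd (2 * int s - 3 * int r - 1)"
    using a b x by (metis dvd_diff dvd_mult)
next
  assume h: "r < d \<and> s < d \<and> int d dvd (2 * int s - 3 * int r - 1)"
  define x where "x = (if odd r then r else r + d)"
  have xo: "odd x" using assms(1) x_def by auto
  have xr: "x mod d = r" using h x_def by auto
  define y where "y = (3*x+1) div 2"
  have y2: "int (2*y) = 3 * int x + 1" using xo y_def by simp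
  have a: "int d dvd (int x - int r)" using modeq_int[of x d r] xr h by simp
  have "2 * (int s - int y) = (2 * int s - 3 * int r - 1) - 3 * (int x - int r)"
    using y2 by simp
  then have "int d dvd 2 * (int s - int y)" using a h by (metis dvd_diff dvd_mult)
  moreover have "coprime (int d) 2" using assms(1) by (simp add: coprime_commute)
  ultimately have "int d dvd (int s - int y)"
    using coprime_dvd_mult_right_iff by blast
  then have "s = y mod d" using eq_mod_iff[of s d y] h by simp
  then show "red_arrow d r s" using red_iff[of d r s] assms h xo xr y_def by auto
qed

lemma red_g:
  assumes "odd d" "d > 1"
  shows "red_arrow d r s \<longleftrightarrow> r < d \<and> s = ((3*r+1)*((d+1) div 2)) mod d"
proof -
  define h where "h = (d+1) div 2"
  have h2: "2 * int h = int d + 1" using two_h[OF assms(1)] h_def by linarith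
  have "red_arrow d r s \<longleftrightarrow> r < d \<and> s < d \<and> int d dvd (2 * int s - 3 * int r - 1)"
    using red_iff_odd[OF assms] .
  also have "\<dots> \<longleftrightarrow> r < d \<and> s < d \<and> int d dvd (int s - (3 * int r + 1) * int h)"
  proof -
    have i1: "int s - (3 * int r + 1) * int h = - int s * int d + int h * (2 * int s - (3 * int r + 1))"
      using alg1[OF h2] .
    have i2: "2 * int s - (3 * int r + 1) = 2 * (int s - (3 * int r + 1) * int h) + (3 * int r + 1) * int d"
      using alg2[OF h2] .
    have e: "2 * int s - 3 * int r - 1 = 2 * int s - (3 * int r + 1)" by simp
    show ?thesis unfolding e using dvd_equiv[OF i1 i2] by blast
  qed
  also have "\<dots> \<longleftrightarrow> r < d \<and> s = ((3*r+1)*h) mod d"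
  proof -
    have "int ((3*r+1)*h) = (3 * int r + 1) * int h" by (simp add: algebra_simps)
    then have "s < d \<Longrightarrow> (int d dvd (int s - (3 * int r + 1) * int h) \<longleftrightarrow> s = ((3*r+1)*h) mod d)"
      using eq_mod_iff[of s d "(3*r+1)*h"] by simp
    then show ?thesis using assms by auto
  qed
  finally show ?thesis unfolding h_def .
qed

lemma coprime3: "\<not> 3 dvd (d::nat) \<Longrightarrow> coprime (int d) 3"
proof -
  assume "\<not> 3 dvd d"
  then have "coprime 3 d" by (intro prime_imp_coprime) auto
  then have "coprime d 3" by (simp add: coprime_commute)
  then show ?thesis using coprime_int_iff[of d 3] by simp
qed

lemma a_even_black_even:
  assumes "even d" "d > 1" "r < d" "even r"
  shows "card {s. black_arrow d r s} = 2"
proof -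
  obtain e where e: "d = 2*e" using assms(1) by blast
  have e0: "e > 0" using e assms by simp
  define t where "t = r div 2"
  have rt: "r = 2*t" using assms(4) t_def by simp
  have te: "t < e" using rt e assms(3) by simp
  have "{s. black_arrow d r s} = {t, t+e}"
  proof (intro Set.set_eqI iffI)
    fix s assume "s \<in> {s. black_arrow d r s}"
    then have s: "s < d" "(2*s) mod d = r" using black_iff[of d r s] assms by auto
    have "(2*s) mod d = 2 * (s mod e)" using e by (simp add: mod_mult_mult1)
    then have sm: "s mod e = t" using s rt by simp
    show "s \<in> {t, t+e}"
    proof (cases "s < e")
      case True then show ?thesis using sm by simp
    next
      case False
      then have "s - e < e" using s e by simp
      then have "(s - e) mod e = s - e" by simp
      moreover have "(s - e) mod e = s mod e" using False by (simp add: le_mod_geq)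
      ultimately show ?thesis using sm False by auto
    qed
  next
    fix s assume "s \<in> {t, t+e}"
    then have "s = t \<or> s = t + e" by simp
    then have "s < d \<and> (2*s) mod d = r"
    proof
      assume "s = t" then show ?thesis using rt te e by simp
    next
      assume "s = t+e"
      then have "2*s = r + d" using rt e by simp
      then show ?thesis using rt te e assms by simp
    qed
    then show "s \<in> {s. black_arrow d r s}" using black_iff[of d r s] assms by auto
  qed
  then show ?thesis using e0 by simp
qed

lemma a_even_black_odd:
  assumes "even d" "d > 1" "r < d" "odd r"
  shows "{s. black_arrow d r s} = {}"
proof -
  obtain e where e: "d = 2*e" using assms(1) by blast
  have "\<And>s. (2*s) mod d = 2 * (s mod e)" using e by (simp add: mod_mult_mult1)
  then show ?thesis using black_iff[of d r] assms by auto
qed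

lemma a_even_red_even:
  assumes "even d" "d > 1" "r < d" "even r"
  shows "{s. red_arrow d r s} = {}"
proof -
  have "\<And>x. x mod d = r \<Longrightarrow> even x"
  proof -
    fix x assume "x mod d = r"
    then have "x mod d mod 2 = r mod 2" by simp
    then have "x mod 2 = r mod 2" using assms(1) by (simp add: mod_mod_cancel)
    then show "even x" using assms(4) by presburger
  qed
  then show ?thesis using red_iff[of d r] assms by auto
qed

lemma a_even_red_odd:
  assumes "even d" "d > 1" "r < d" "odd r"
  shows "card {s. red_arrow d r s} = 2"
proof -
  obtain e where e: "d = 2*e" using assms(1) by blast
  have e0: "e > 0" using e assms by simp
  define a where "a = (3*r+1) div 2"
  have a2: "2*a = 3*r+1" using assms(4) a_def by presburger
  have "{s. red_arrow d r s} = {a mod d, (a+e) mod d}"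
  proof (intro Set.set_eqI iffI)
    fix s assume "s \<in> {s. red_arrow d r s}"
    then obtain x where x: "odd x" "x mod d = r" "((3*x+1) div 2) mod d = s"
      using red_iff[of d r s] assms by auto
    define k where "k = x div d"
    have xk: "x = r + d*k" using x(2) k_def mod_mult_div_eq[of x d] by simp
    have yk: "(3*x+1) div 2 = a + 3*e*k"
    proof -
      have "3*x+1 = 2*(a + 3*e*k)" using xk a2 e by (simp add: algebra_simps)
      then show ?thesis by simp
    qed
    show "s \<in> {a mod d, (a+e) mod d}"
    proof (cases "even k")
      case True
      then obtain j where "k = 2*j" by blast
      then have eq: "a + 3*e*k = a + d*(3*j)" using e by simp
      have "s = (a + 3*e*k) mod d" using x(3) yk by simp
      also have "\<dots> = (a + d*(3*j)) mod d" by (simp only: eq)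
      also have "\<dots> = a mod d" by simp
      finally show ?thesis by simp
    next
      case False
      then obtain j where "k = 2*j+1" using oddE by blast
      then have eq: "a + 3*e*k = (a + e) + d*(3*j+1)" using e by (simp add: algebra_simps)
      have "s = (a + 3*e*k) mod d" using x(3) yk by simp
      also have "\<dots> = ((a + e) + d*(3*j+1)) mod d" by (simp only: eq)
      also have "\<dots> = (a + e) mod d" by (rule mod_mult_self2)
      finally show ?thesis by simp
    qed
  next
    fix s assume "s \<in> {a mod d, (a+e) mod d}"
    then have "s = a mod d \<or> s = (a+e) mod d" by simp
    then show "s \<in> {s. red_arrow d r s}"
    proof
      assume "s = a mod d"
      then have "odd r \<and> r mod d = r \<and> ((3*r+1) div 2) mod d = s" using assms a_def by simp
      then show ?thesis using red_iff[of d r s] assms by auto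
    next
      assume s: "s = (a+e) mod d"
      have "(3*(r+d)+1) div 2 = (a + e) + d" using a2 e by simp
      then have "odd (r+d) \<and> (r+d) mod d = r \<and> ((3*(r+d)+1) div 2) mod d = s"
        using assms s by simp
      then have "\<exists>x. odd x \<and> x mod d = r \<and> ((3*x+1) div 2) mod d = s" by blast
      moreover have "s < d" using s assms by simp
      ultimately show ?thesis using red_iff[of d r s] assms by auto
    qed
  qed
  moreover have "a mod d \<noteq> (a+e) mod d"
  proof
    assume "a mod d = (a+e) mod d"
    then have "d dvd (a+e) - a" using mod_eq_dvd_iff_nat[of a "a+e" d] by simp
    then have "2*e dvd e" using e by simp
    then show False using dvd_imp_le[of "2*e" e] e0 by simp
  qed
  ultimately show ?thesis by simp
qed

lemma a_odd:
  assumes "odd d" "d > 1" "r < d"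
  shows "card {s. black_arrow d r s} = 1 \<and> card {s. red_arrow d r s} = 1"
proof -
  have "{s. black_arrow d r s} = {(r*((d+1) div 2)) mod d}" using black_f[OF assms(1,2)] assms(3) by auto
  moreover have "{s. red_arrow d r s} = {((3*r+1)*((d+1) div 2)) mod d}" using red_g[OF assms(1,2)] assms(3) by auto
  ultimately show ?thesis by simp
qed

lemma b_black:
  assumes "d > 1" "r < d"
  shows "card {s. black_arrow d s r} = 1"
proof -
  have "{s. black_arrow d s r} = {(2*r) mod d}"
  proof (rule Set.set_eqI)
    fix s
    have "black_arrow d s r \<longleftrightarrow> s < d \<and> r < d \<and> (2*r) mod d = s" using black_iff[of d s r] assms by simp
    also have "\<dots> \<longleftrightarrow> s = (2*r) mod d" using assms by auto
    finally show "s \<in> {s. black_arrow d s r} \<longleftrightarrow> s \<in> {(2*r) mod d}" by simp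
  qed
  then show ?thesis by simp
qed

lemma b_red3:
  assumes "3 dvd d" "d > 1" "r < d"
  shows "{s. red_arrow d s r} \<noteq> {} \<longleftrightarrow> r mod 3 = 2"
proof
  assume "{s. red_arrow d s r} \<noteq> {}"
  then obtain s x where x: "odd x" "x mod d = s" "((3*x+1) div 2) mod d = r"
    using red_iff[of d _ r] assms by auto
  have "((3*x+1) div 2) mod 3 = 2" using x(1) by presburger
  moreover have "((3*x+1) div 2) mod d mod 3 = ((3*x+1) div 2) mod 3" using assms(1) by (simp add: mod_mod_cancel)
  ultimately show "r mod 3 = 2" using x(3) by simp
next
  assume r: "r mod 3 = 2"
  define x where "x = (2*r-1) div 3"
  have "odd x \<and> (3*x+1) div 2 = r" using r x_def by presburger
  then have "red_arrow d (x mod d) r" using red_iff[of d "x mod d" r] assms by auto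
  then show "{s. red_arrow d s r} \<noteq> {}" by auto
qed

lemma b_red_not3:
  assumes "\<not> 3 dvd d" "d > 1" "r < d"
  shows "card {s. red_arrow d s r} = 1"
proof -
  obtain y where y: "y mod 3 = 2" "y mod d = r"
  proof -
    have "r mod 3 = 2 \<or> (r+d) mod 3 = 2 \<or> (r+2*d) mod 3 = 2" using assms(1) by presburger
    moreover have "r mod d = r" "(r+d) mod d = r" "(r+2*d) mod d = r" using assms by simp_all
    ultimately show ?thesis using that by blast
  qed
  define x where "x = (2*y-1) div 3"
  have xy: "odd x \<and> (3*x+1) div 2 = y" using y(1) x_def by presburger
  have ex: "red_arrow d (x mod d) r" using red_iff[of d "x mod d" r] assms xy y by auto
  have uniq: "s1 = s2" if rs: "red_arrow d s1 r" "red_arrow d s2 r" for s1 s2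
  proof -
    obtain x1 where x1: "odd x1" "x1 mod d = s1" "((3*x1+1) div 2) mod d = r" "s1 < d"
      using red_iff[of d s1 r] assms rs(1) by auto
    obtain x2 where x2: "odd x2" "x2 mod d = s2" "((3*x2+1) div 2) mod d = r" "s2 < d"
      using red_iff[of d s2 r] assms rs(2) by auto
    define y1 where "y1 = (3*x1+1) div 2"
    define y2 where "y2 = (3*x2+1) div 2"
    have e1: "2 * int y1 = 3 * int x1 + 1" using x1(1) y1_def by presburger
    have e2: "2 * int y2 = 3 * int x2 + 1" using x2(1) y2_def by presburger
    have "int d dvd (int y1 - int y2)" using modeq_int[of y1 d y2] x1(3) x2(3) y1_def y2_def by simp
    moreover have "3 * (int x1 - int x2) = 2 * (int y1 - int y2)" using e1 e2 by simp
    ultimately have "int d dvd 3 * (int x1 - int x2)" by (metis dvd_mult)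
    then have "int d dvd (int x1 - int x2)"
      using coprime3[OF assms(1)] coprime_dvd_mult_right_iff by blast
    then have "x1 mod d = x2 mod d" using modeq_int by blast
    then show ?thesis using x1 x2 by simp
  qed
  have "{s. red_arrow d s r} = {x mod d}" using ex uniq by blast
  then show ?thesis by simp
qed


lemma cyc_dvd:
  assumes "(f ^^ n) r = r"
  shows "cycle_len f r dvd n"
proof (cases "n = 0")
  case True then show ?thesis by simp
next
  case False
  let ?c = "cycle_len f r"
  have ex: "n > 0 \<and> (f ^^ n) r = r" using False assms by simp
  have c: "?c > 0 \<and> (f ^^ ?c) r = r" unfolding cycle_len_def using LeastI[of "\<lambda>k. k > 0 \<and> (f ^^ k) r = r", OF ex] .
  have mult: "(f ^^ (q * ?c)) r = r" for q
  proof (induction q)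
    case 0 then show ?case by simp
  next
    case (Suc q)
    have "(f ^^ (Suc q * ?c)) r = (f ^^ ?c) ((f ^^ (q * ?c)) r)"
      by (simp add: funpow_add)
    then show ?case using Suc c by simp
  qed
  have "(f ^^ n) r = (f ^^ (n mod ?c)) ((f ^^ ((n div ?c) * ?c)) r)"
    by (metis funpow_add comp_apply div_mult_mod_eq add.commute)
  then have m: "(f ^^ (n mod ?c)) r = r" using mult assms by simp
  show ?thesis
  proof (rule ccontr)
    assume "\<not> ?c dvd n"
    then have "n mod ?c > 0" by (simp add: mod_greater_zero_iff_not_dvd)
    then have P: "n mod ?c > 0 \<and> (f^^(n mod ?c)) r = r" using m by simp
    have "?c \<le> n mod ?c" using Least_le[of "\<lambda>k. k>0 \<and> (f^^k) r = r" "n mod ?c", OF P] unfolding cycle_len_def .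
    moreover have "n mod ?c < ?c" using c by simp
    ultimately show False by simp
  qed
qed

lemma f_pow:
  fixes d r h :: nat
  assumes "d > 0" "r < d"
  shows "((\<lambda>r. (r*h) mod d) ^^ k) r = (r * h^k) mod d"
proof (induction k)
  case 0 then show ?case using assms by simp
next
  case (Suc k)
  have "((\<lambda>r. (r*h) mod d)^^Suc k) r = ((r*h^k) mod d * h) mod d" using Suc by simp
  also have "\<dots> = (r*h^k*h) mod d" by (rule mod_mult_left_eq)
  also have "\<dots> = r*h^(Suc k) mod d" by (simp add: ac_simps)
  finally show ?case .
qed

lemma alg3: "(G::int) + 1 - (3*H)^(Suc k)*(R+1) = (G - (3*T+1)*H) + (1 - 2*H) + 3*H*(T + 1 - (3*H)^k*(R+1))"
  by (simp add: algebra_simps)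

lemma g_pow:
  fixes d r :: nat
  assumes "odd d" "d > 1" "r < d"
  shows "int d dvd (int (((\<lambda>r. ((3*r+1)*((d+1) div 2)) mod d) ^^ k) r) + 1 - (3 * int ((d+1) div 2))^k * (int r + 1))"
proof (induction k)
  case 0 then show ?case by simp
next
  case (Suc k)
  define h where "h = (d+1) div 2"
  define g where "g = (\<lambda>r. ((3*r+1)*h) mod d)"
  define t where "t = (g ^^ k) r"
  have h2: "2 * int h = int d + 1" using two_h[OF assms(1)] h_def by linarith
  have IH: "int d dvd (int t + 1 - (3 * int h)^k * (int r + 1))" using Suc h_def g_def t_def by simp
  have a: "int d dvd (int (g t) - (3 * int t + 1) * int h)"
  proof -
    have "(g t) mod d = ((3*t+1)*h) mod d" using g_def by simp
    then have "int d dvd (int (g t) - int ((3*t+1)*h))" using modeq_int by blast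
    moreover have "int ((3*t+1)*h) = (3 * int t + 1) * int h" by (simp add: algebra_simps)
    ultimately show ?thesis by simp
  qed
  have b: "int d dvd (1 - 2 * int h)" using h2 by simp
  have "int (g t) + 1 - (3*int h)^(Suc k)*(int r+1) = (int (g t) - (3*int t+1)*int h) + (1 - 2*int h) + 3*int h*(int t + 1 - (3*int h)^k*(int r+1))"
    by (rule alg3)
  also have "int d dvd \<dots>" using a b IH by (intro dvd_add dvd_mult) auto
  finally have "int d dvd int (g t) + 1 - (3*int h)^(Suc k)*(int r+1)" .
  moreover have "(g ^^ Suc k) r = g t" using t_def by simp
  ultimately show ?case using g_def h_def by simp
qed

lemma cancel_h:
  assumes h2: "2 * (H::int) = D + 1" and dv: "D dvd X * H"
  shows "D dvd X"
proof -
  have A: "D dvd X * H * 2" using dv by (rule dvd_mult2)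
  have B: "D dvd X * D" by simp
  have "X * H * 2 - X * D = X * (2 * H) - X * D" by (simp add: algebra_simps)
  also have "\<dots> = X" unfolding h2 by (simp add: algebra_simps)
  finally have e: "X * H * 2 - X * D = X" .
  have "D dvd X * H * 2 - X * D" using A B by (rule dvd_diff)
  then show ?thesis unfolding e .
qed

lemma black_inj:
  fixes d a b :: nat
  assumes "odd d" "d > 1" "a < d" "b < d" "(a*((d+1) div 2)) mod d = (b*((d+1) div 2)) mod d"
  shows "a = b"
proof -
  define h where "h = (d+1) div 2"
  have h2: "2 * int h = int d + 1" using two_h[OF assms(1)] h_def by linarith
  have "int d dvd (int (a*h) - int (b*h))" using modeq_int assms(5) h_def by blast
  then have "int d dvd (int a - int b) * int h" by (simp add: algebra_simps)
  then have "int d dvd (int a - int b)" by (rule cancel_h[OF h2])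
  then show ?thesis using eq_mod_iff[of a d b] assms by simp
qed

lemma red_inj:
  fixes d a b :: nat
  assumes "odd d" "d > 1" "\<not> 3 dvd d" "a < d" "b < d"
    "((3*a+1)*((d+1) div 2)) mod d = ((3*b+1)*((d+1) div 2)) mod d"
  shows "a = b"
proof -
  define h where "h = (d+1) div 2"
  have h2: "2 * int h = int d + 1" using two_h[OF assms(1)] h_def by linarith
  have "int d dvd (int ((3*a+1)*h) - int ((3*b+1)*h))" using modeq_int assms(6) h_def by blast
  moreover have "int ((3*a+1)*h) - int ((3*b+1)*h) = (3 * (int a - int b)) * int h" by (simp add: algebra_simps)
  ultimately have "int d dvd (3 * (int a - int b)) * int h" by simp
  then have "int d dvd 3 * (int a - int b)" by (rule cancel_h[OF h2])
  then have "int d dvd (int a - int b)" using coprime3[OF assms(3)] coprime_dvd_mult_right_iff by blast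
  then show ?thesis using eq_mod_iff[of a d b] assms by simp
qed

lemma black_loop:
  fixes d r :: nat
  assumes "d > 1" "r < d"
  shows "black_arrow d r r \<longleftrightarrow> r = 0"
proof -
  have "black_arrow d r r \<longleftrightarrow> (2*r) mod d = r mod d" using black_iff[of d r r] assms by simp
  also have "\<dots> \<longleftrightarrow> int d dvd int r" using modeq_int[of "2*r" d r] by simp
  also have "\<dots> \<longleftrightarrow> r = 0" using assms by (auto dest: dvd_imp_le)
  finally show ?thesis .
qed

lemma red_loop:
  fixes d r :: nat
  assumes "odd d" "d > 1" "r < d"
  shows "red_arrow d r r \<longleftrightarrow> r = d - 1"
proof -
  have "red_arrow d r r \<longleftrightarrow> int d dvd (2 * int r - 3 * int r - 1)" using red_iff_odd[OF assms(1,2), of r r] assms by simp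
  also have "\<dots> \<longleftrightarrow> int d dvd int (r+1)"
  proof -
    have e: "2 * int r - 3 * int r - 1 = - (int r + 1)" by simp
    show ?thesis unfolding e dvd_minus_iff by (simp add: add.commute)
  qed
  also have "\<dots> \<longleftrightarrow> d dvd (r+1)" by (simp only: of_nat_dvd_iff)
  also have "\<dots> \<longleftrightarrow> r = d - 1"
  proof
    assume "d dvd (r+1)"
    then have "d \<le> r + 1" by (rule dvd_imp_le) simp
    then show "r = d - 1" using assms by simp
  next
    assume "r = d - 1" then show "d dvd (r+1)" using assms by simp
  qed
  finally show ?thesis .
qed


lemma four_pow: "\<exists>c::int. 4^(3^j) = 1 + 3^(j+1)*c \<and> \<not> 3 dvd c"
proof (induction j)
  case 0 then show ?case by (intro exI[of _ 1]) simp
next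
  case (Suc j)
  then obtain c :: int where c: "4^(3^j) = 1 + 3^(j+1)*c" "\<not> 3 dvd c" by blast
  define B :: int where "B = 3^j"
  have A: "(3::int)^(j+1) = 3*B" using B_def by simp
  have A2: "(3::int)^(Suc j+1) = 9*B" using B_def by simp
  have "(4::int)^(3^(Suc j)) = (4^(3^j))^3" by (simp add: power_mult[symmetric] mult.commute)
  also have "\<dots> = (1 + 3*B*c)^3" using c A by simp
  also have "\<dots> = 1 + 9*B*(c + 3*(B*c^2 + B*B*c^3))" by (simp add: power3_eq_cube algebra_simps power2_eq_square)
  finally have e: "(4::int)^(3^(Suc j)) = 1 + 3^(Suc j+1)*(c + 3*(B*c^2 + B*B*c^3))" using A2 by simp
  have "\<not> 3 dvd (c + 3*(B*c^2 + B*B*c^3))"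
  proof
    assume "3 dvd (c + 3*(B*c^2 + B*B*c^3))"
    then have "(3::int) dvd (c + 3*(B*c^2 + B*B*c^3)) - 3*(B*c^2 + B*B*c^3)" by (rule dvd_diff) simp
    then show False using c(2) by simp
  qed
  then show ?case using e by blast
qed

lemma q_pow:
  fixes c :: int
  assumes "n \<ge> 1"
  shows "\<exists>E::int. (1 + 3^n*c)^t = 1 + int t*c*3^n + 3^(n+1)*E"
proof (induction t)
  case 0 then show ?case by (intro exI[of _ 0]) simp
next
  case (Suc t)
  then obtain E :: int where E: "(1 + 3^n*c)^t = 1 + int t*c*3^n + 3^(n+1)*E" by blast
  define P :: int where "P = 3^n"
  define Pm :: int where "Pm = 3^(n-1)"
  have PP: "P = 3*Pm" using assms unfolding P_def Pm_def by (cases n) auto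
  have P1: "(3::int)^(n+1) = 3*P" using P_def by simp
  have "(1 + 3^n*c)^(Suc t) = (1 + int t*c*P + 3*P*E) * (1 + P*c)" using E P_def P1 by simp
  also have "\<dots> = 1 + int (Suc t)*c*P + 3*P*(int t*c*c*Pm + E*(1+P*c))"
    by (simp add: algebra_simps PP)
  finally have "(1 + 3^n*c)^(Suc t) = 1 + int (Suc t)*c*3^n + 3^(n+1)*(int t*c*c*Pm + E*(1+P*c))"
    using P_def P1 by simp
  then show ?case by blast
qed

lemma prim:
  fixes u v :: int
  assumes "\<not> 3 dvd u" "\<not> 3 dvd v"
  shows "\<exists>k. (3::int)^n dvd 2^k*v - u"
proof (induction n)
  case 0 then show ?case by simp
next
  case (Suc n)
  show ?case
  proof (cases "n = 0")
    case True
    have "3 dvd v - u \<or> 3 dvd 2*v - u" using assms by presburger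
    then show ?thesis
    proof
      assume "3 dvd v - u" then show ?thesis using True by (intro exI[of _ 0]) simp
    next
      assume "3 dvd 2*v - u" then show ?thesis using True by (intro exI[of _ 1]) simp
    qed
  next
    case False
    then have n1: "n \<ge> 1" by simp
    obtain k where "(3::int)^n dvd 2^k*v - u" using Suc by blast
    then obtain e where e: "2^k*v - u = 3^n * e" by blast
    obtain c :: int where c: "4^(3^(n-1)) = 1 + 3^n*c" "\<not> 3 dvd c"
      using four_pow[of "n-1"] n1 by auto
    have "\<not> 3 dvd u*c" using assms c(2) by (simp add: prime_dvd_mult_iff)
    then have "3 dvd e \<or> 3 dvd e + u*c \<or> 3 dvd e + 2*(u*c)" by presburger
    then have "\<exists>t::nat. 3 dvd e + u*c*int t"
    proof (elim disjE)
      assume "3 dvd e" then show ?thesis by (intro exI[of _ 0]) simp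
    next
      assume "3 dvd e + u*c" then show ?thesis by (intro exI[of _ 1]) simp
    next
      assume "3 dvd e + 2*(u*c)" then show ?thesis by (intro exI[of _ 2]) (simp add: mult.commute)
    qed
    then obtain t :: nat where t: "3 dvd e + u*c*int t" by blast
    obtain E :: int where E: "(1 + 3^n*c)^t = 1 + int t*c*3^n + 3^(n+1)*E" using q_pow[OF n1] by blast
    define P :: int where "P = 3^n"
    define Pm :: int where "Pm = 3^(n-1)"
    have PP: "P = 3*Pm" using n1 unfolding P_def Pm_def by (cases n) auto
    have P1: "(3::int)^(n+1) = 3*P" using P_def by simp
    define K where "K = k + 2*3^(n-1)*t"
    have pw: "(2::int)^K = 2^k * (4^(3^(n-1)))^t"
      unfolding K_def by (simp add: power_add power_mult)
    have X: "2^k*v = u + P*e" using e P_def by simp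
    have "2^K*v - u = (2^k*v) * (1 + int t*c*P + 3*P*E) - u"
      using pw c(1) E P_def P1 by (simp add: algebra_simps)
    also have "\<dots> = P*(e + u*c*int t) + 3*P*(Pm*e*int t*c) + 3*P*(E*(u + P*e))"
      unfolding X by (simp add: algebra_simps PP)
    finally have eq: "2^K*v - u = P*(e + u*c*int t) + 3*P*(Pm*e*int t*c) + 3*P*(E*(u + P*e))" .
    have "3*P dvd P*(e + u*c*int t)" using t by (simp add: mult.commute mult_dvd_mono)
    then have "3*P dvd 2^K*v - u" unfolding eq by (intro dvd_add) auto
    then show ?thesis using P1 by (metis Suc_eq_plus1)
  qed
qed


lemma h3_not3:
  assumes "m \<ge> 1"
  shows "\<not> 3 dvd (((3::nat)^m+1) div 2)"
proof
  assume a: "3 dvd (((3::nat)^m+1) div 2)"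
  have "odd ((3::nat)^m)" by simp
  then have e: "2 * ((3^m+1) div 2) = (3::nat)^m + 1" by presburger
  have "3 dvd (3::nat)^m" using assms by (cases m) auto
  moreover have "3 dvd (3::nat)^m + 1" using a e by (metis dvd_mult2 mult.commute)
  ultimately have "(3::nat) dvd 1" by (metis dvd_add_right_iff)
  then show False by simp
qed

lemma S_pres:
  assumes "m \<ge> 1" "j \<le> m"
  shows "3^j dvd ((r*(((3::nat)^m+1) div 2)) mod 3^m) \<longleftrightarrow> 3^j dvd r"
proof -
  define h where "h = ((3::nat)^m+1) div 2"
  have "3^j dvd ((3::nat)^m)" using assms(2) by (simp add: le_imp_power_dvd)
  then have "3^j dvd ((r*h) mod 3^m) \<longleftrightarrow> 3^j dvd r*h" by (rule dvd_mod_iff)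
  also have "\<dots> \<longleftrightarrow> 3^j dvd r"
  proof -
    have "coprime h (3^j)" using h3_not3[OF assms(1)] h_def by (intro prime_imp_power_coprime) auto
    then have "coprime (3^j) h" by (simp add: coprime_commute)
    then show ?thesis by (rule coprime_dvd_mult_left_iff)
  qed
  finally show ?thesis using h_def by simp
qed

lemma cong_d1: "int d dvd (int d + 1)^k - 1"
proof -
  have "[int d + 1 = 1] (mod int d)" by (simp add: cong_def)
  then have "[(int d + 1)^k = 1^k] (mod int d)" by (rule cong_pow)
  then show ?thesis by (simp add: cong_iff_dvd_diff)
qed

lemma conn:
  fixes d r s :: nat
  assumes "m \<ge> 1" "i < m" "d = 3^m"
    and r: "r < d" "3^i dvd r" "\<not> 3^(i+1) dvd r"
    and s: "s < d" "3^i dvd s" "\<not> 3^(i+1) dvd s"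
  shows "\<exists>k. ((\<lambda>r. (r*((d+1) div 2)) mod d) ^^ k) r = s"
proof -
  define h where "h = (d+1) div 2"
  have od: "odd d" using assms(3) by simp
  have h2: "2 * int h = int d + 1" using two_h[OF od] h_def by linarith
  obtain u where u: "r = 3^i * u" using r(2) by blast
  obtain v where v: "s = 3^i * v" using s(2) by blast
  have u3': "\<not> 3 dvd u" using r(3) u by (auto simp: power_add)
  have v3': "\<not> 3 dvd v" using s(3) v by (auto simp: power_add)
  have u3: "\<not> 3 dvd int u" using u3' by presburger
  have v3: "\<not> 3 dvd int v" using v3' by presburger
  obtain k where k: "(3::int)^(m-i) dvd 2^k * int v - int u" using prim[OF u3 v3] by blast
  have dm: "(3::int)^(m-i) dvd int d" using assms by (simp add: le_imp_power_dvd)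
  have c1: "(3::int)^(m-i) dvd (2 * int h)^k - 1" using cong_d1[of d k] h2 dm dvd_trans by metis
  have "int u * int h^k - int v = - (int h^k * (2^k * int v - int u)) + int v * ((2 * int h)^k - 1)"
    by (simp add: algebra_simps power_mult_distrib)
  also have "(3::int)^(m-i) dvd \<dots>" using k c1 by (intro dvd_add dvd_mult) auto
  finally have a: "(3::int)^(m-i) dvd int u * int h^k - int v" .
  have "int d = 3^i * 3^(m-i)" using assms by (simp add: power_add[symmetric])
  moreover have "int s - int r * int h ^ k = - (3^i * (int u * int h^k - int v))" using u v by (simp add: algebra_simps)
  ultimately have "int d dvd int s - int (r * h^k)" using a by (simp add: mult_dvd_mono)
  then have "s = (r*h^k) mod d" using eq_mod_iff[of s d "r*h^k"] s(1) by simp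
  moreover have "((\<lambda>r. (r*((d+1) div 2)) mod d) ^^ k) r = (r*h^k) mod d"
    unfolding h_def using r(1) by (intro f_pow) auto
  ultimately show ?thesis by metis
qed

lemma funpow_lt: "r < d \<Longrightarrow> (\<And>x. f x < (d::nat)) \<Longrightarrow> (f ^^ n) r < d"
  by (induction n) auto

lemma single_cyc:
  fixes d :: nat
  assumes "m \<ge> 1" "i < m" "d = 3^m"
  shows "single_cycle (black_arrow d) {r. r < d \<and> 3^i dvd r \<and> \<not> 3^(i+1) dvd r}"
proof -
  define S where "S = {r. r < d \<and> 3^i dvd r \<and> \<not> 3^(i+1) dvd r}"
  define f where "f = (\<lambda>r. (r*((d+1) div 2)) mod d)"
  have od: "odd d" using assms(3) by simp
  have d1: "d > 1" using assms(1,3) one_less_power[of "3::nat" m] by simp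
  have "(3::nat)^i < 3^m" using assms(2) by simp
  then have "3^i \<in> S" unfolding S_def using assms by (simp add: power_add)
  then have ne: "S \<noteq> {}" by blast
  have Sd: "\<And>r. r \<in> S \<Longrightarrow> r < d" unfolding S_def by simp
  have inj: "inj_on f S"
  proof (rule inj_onI)
    fix a b assume ab: "a \<in> S" "b \<in> S" "f a = f b"
    show "a = b" by (rule black_inj[OF od d1 Sd[OF ab(1)] Sd[OF ab(2)]]) (use ab(3) f_def in simp)
  qed
  have fr: "f r = (r*(((3::nat)^m+1) div 2)) mod 3^m" for r using assms(3) f_def by simp
  have img: "f ` S \<subseteq> S"
  proof
    fix y assume "y \<in> f ` S"
    then obtain r where r: "r \<in> S" "y = f r" by blast
    have "y < d" using r d1 f_def by simp
    moreover have "3^i dvd y" using r S_pres[OF assms(1), of i r] assms(2) fr unfolding S_def by simp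
    moreover have "\<not> 3^(i+1) dvd y" using r S_pres[OF assms(1), of "i+1" r] assms(2) fr unfolding S_def by simp
    ultimately show "y \<in> S" unfolding S_def by simp
  qed
  have fin: "finite S" unfolding S_def by simp
  have "f ` S = S" by (rule endo_inj_surj[OF fin img inj])
  then have bij: "bij_betw f S S" using inj by (simp add: bij_betw_def)
  have arr: "\<forall>r\<in>S. \<forall>s. black_arrow d r s \<longleftrightarrow> s = f r"
  proof (intro ballI allI)
    fix r s assume "r \<in> S"
    then have "r < d" by (rule Sd)
    then show "black_arrow d r s \<longleftrightarrow> s = f r" using black_f[OF od d1, of r s] f_def by simp
  qed
  have con: "\<forall>r\<in>S. \<forall>s\<in>S. \<exists>k. (f ^^ k) r = s"
  proof (intro ballI)
    fix r s assume rs: "r \<in> S" "s \<in> S"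
    have r: "r < d" "3^i dvd r" "\<not> 3^(i+1) dvd r" using rs(1) unfolding S_def by auto
    have s: "s < d" "3^i dvd s" "\<not> 3^(i+1) dvd s" using rs(2) unfolding S_def by auto
    show "\<exists>k. (f ^^ k) r = s" using conn[OF assms r s] f_def by simp
  qed
  show ?thesis unfolding single_cycle_def cycles_via_def S_def[symmetric] using ne bij arr con by blast
qed


lemma coprime3_iff: "coprime (r::nat) 3 \<longleftrightarrow> \<not> 3 dvd r"
proof
  assume c: "coprime r 3"
  show "\<not> 3 dvd r"
  proof
    assume "3 dvd r"
    then have "(3::nat) = 1" using coprime_common_divisor_nat[OF c] by simp
    then show False by simp
  qed
next
  assume "\<not> 3 dvd r"
  then have "coprime 3 r" by (intro prime_imp_coprime) auto
  then show "coprime r 3" by (simp add: coprime_commute)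
qed

lemma c_black:
  fixes d :: nat
  assumes "odd d" "d > 1"
  shows "\<exists>f. cycles_via (black_arrow d) {..<d} f \<and>
            (\<forall>r<d. black_arrow d r r \<longleftrightarrow> r = 0) \<and>
            (\<forall>r<d. cycle_len f r dvd ord d 2)"
proof -
  define h where "h = (d+1) div 2"
  define f where "f = (\<lambda>r. (r*h) mod d)"
  have inj: "inj_on f {..<d}"
  proof (rule inj_onI)
    fix a b assume ab: "a \<in> {..<d}" "b \<in> {..<d}" "f a = f b"
    show "a = b" by (rule black_inj[OF assms]) (use ab f_def h_def in auto)
  qed
  have img: "f ` {..<d} \<subseteq> {..<d}" using assms f_def by auto
  have "f ` {..<d} = {..<d}" by (rule endo_inj_surj[OF _ img inj]) simp
  then have bij: "bij_betw f {..<d} {..<d}" using inj by (simp add: bij_betw_def)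
  have arr: "\<forall>r\<in>{..<d}. \<forall>s. black_arrow d r s \<longleftrightarrow> s = f r"
    using black_f[OF assms] f_def h_def by auto
  have loop: "\<forall>r<d. black_arrow d r r \<longleftrightarrow> r = 0" using black_loop assms by auto
  have cyc: "cycle_len f r dvd ord d 2" if r: "r < d" for r
  proof -
    define n where "n = ord d 2"
    have c2: "[2^n = 1] (mod d)" using ord_works[of 2 d] n_def by simp
    have h1: "[2*h = 1] (mod d)"
    proof -
      have "(d + 1) mod d = 1 mod d" by (rule mod_add_self1)
      then show ?thesis using two_h[OF assms(1)] h_def by (simp add: cong_def)
    qed
    have "[(2*h)^n = 1^n] (mod d)" by (rule cong_pow[OF h1])
    then have a: "[2^n*h^n = 1] (mod d)" by (simp add: power_mult_distrib)
    have "[2^n*h^n = 1*h^n] (mod d)" by (rule cong_scalar_right[OF c2])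
    then have "[h^n = 2^n*h^n] (mod d)" by (simp add: cong_sym)
    then have "[h^n = 1] (mod d)" using a by (rule cong_trans)
    then have "[r*h^n = r*1] (mod d)" by (rule cong_scalar_left)
    then have "(r*h^n) mod d = r" using r by (simp add: cong_def)
    moreover have "(f ^^ n) r = (r*h^n) mod d" unfolding f_def using r assms by (intro f_pow) auto
    ultimately have "(f ^^ n) r = r" by simp
    then show ?thesis unfolding n_def[symmetric] by (rule cyc_dvd)
  qed
  show ?thesis unfolding cycles_via_def using bij arr loop cyc by blast
qed

lemma c_red:
  fixes d :: nat
  assumes "odd d" "d > 1" "\<not> 3 dvd d"
  shows "\<exists>g. cycles_via (red_arrow d) {..<d} g \<and>
            (\<forall>r<d. red_arrow d r r \<longleftrightarrow> r = d - 1) \<and>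
            (\<forall>r<d. \<forall>a. [2 * a = 3] (mod d) \<longrightarrow> cycle_len g r dvd ord d a)"
proof -
  define h where "h = (d+1) div 2"
  define g where "g = (\<lambda>r. ((3*r+1)*h) mod d)"
  have inj: "inj_on g {..<d}"
  proof (rule inj_onI)
    fix a b assume ab: "a \<in> {..<d}" "b \<in> {..<d}" "g a = g b"
    show "a = b" by (rule red_inj[OF assms]) (use ab g_def h_def in auto)
  qed
  have img: "g ` {..<d} \<subseteq> {..<d}" using assms g_def by auto
  have "g ` {..<d} = {..<d}" by (rule endo_inj_surj[OF _ img inj]) simp
  then have bij: "bij_betw g {..<d} {..<d}" using inj by (simp add: bij_betw_def)
  have arr: "\<forall>r\<in>{..<d}. \<forall>s. red_arrow d r s \<longleftrightarrow> s = g r"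
    using red_g[OF assms(1,2)] g_def h_def by auto
  have loop: "\<forall>r<d. red_arrow d r r \<longleftrightarrow> r = d - 1" using red_loop assms by auto
  have cyc: "cycle_len g r dvd ord d a" if r: "r < d" and a2: "[2 * a = 3] (mod d)" for r a
  proof -
    define n where "n = ord d a"
    have ca: "[a^n = 1] (mod d)" using ord_works[of a d] n_def by simp
    have h1: "[2*h = 1] (mod d)"
    proof -
      have "(d + 1) mod d = 1 mod d" by (rule mod_add_self1)
      then show ?thesis using two_h[OF assms(1)] h_def by (simp add: cong_def)
    qed
    have "[2*a*h = 3*h] (mod d)" by (rule cong_scalar_right[OF a2])
    then have "[3*h = a*(2*h)] (mod d)" by (simp add: cong_sym ac_simps)
    moreover have "[a*(2*h) = a*1] (mod d)" by (rule cong_scalar_left[OF h1])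
    ultimately have "[3*h = a] (mod d)" using cong_trans by fastforce
    then have "[(3*h)^n = a^n] (mod d)" by (rule cong_pow)
    then have "[(3*h)^n = 1] (mod d)" using ca by (rule cong_trans)
    then have "[int ((3*h)^n) = int 1] (mod int d)" using cong_int_iff by blast
    then have X: "int d dvd (3 * int h)^n - 1" by (simp add: cong_iff_dvd_diff)
    define G where "G = (g ^^ n) r"
    have P: "int d dvd int G + 1 - (3 * int h)^n * (int r + 1)"
      using g_pow[OF assms(1,2) r, of n] G_def g_def h_def by simp
    have "int G - int r = (int G + 1 - (3 * int h)^n * (int r + 1)) + ((3 * int h)^n - 1) * (int r + 1)"
      by (simp add: algebra_simps)
    also have "int d dvd \<dots>" using P X by (intro dvd_add dvd_mult2) auto
    finally have "int d dvd int G - int r" .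
    moreover have "G < d" unfolding G_def using r assms g_def by (intro funpow_lt) auto
    ultimately have "G = r mod d" using eq_mod_iff[of G d r] by simp
    then have "(g ^^ n) r = r" using r G_def by simp
    then show ?thesis unfolding n_def[symmetric] by (rule cyc_dvd)
  qed
  show ?thesis unfolding cycles_via_def using bij arr loop cyc by blast
qed

lemma dvd_sub_rev:
  assumes "(D::int) dvd D - X" shows "D dvd X"
proof -
  have "D dvd D - (D - X)" using dvd_diff[OF dvd_refl[of D] assms] .
  then show ?thesis by simp
qed

lemma e_part:
  fixes d m :: nat
  assumes "d = 3^m" "d > 1"
  shows "\<exists>g. (\<forall>r<d. \<forall>s. red_arrow d r s \<longleftrightarrow> s = g r) \<and>
            g (d - 1) = d - 1 \<and>
            (\<forall>r<d. g r = r \<longrightarrow> r = d - 1) \<and>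
            (\<forall>r<d. \<exists>k. (g ^^ k) r = d - 1) \<and>
            (\<forall>r<d. (\<not> (\<exists>s. red_arrow d s r)) \<longleftrightarrow> r mod 3 \<noteq> 2) \<and>
            (\<forall>r<d. r mod 3 \<noteq> 2 \<longrightarrow> (g ^^ m) r = d - 1 \<and> (\<forall>k<m. (g ^^ k) r \<noteq> d - 1))"
proof -
  have m1: "m \<ge> 1" using assms by (cases m) auto
  have od: "odd d" using assms(1) by simp
  have d3: "3 dvd d" using assms(1) m1 by (cases m) auto
  define h where "h = (d+1) div 2"
  define g where "g = (\<lambda>r. ((3*r+1)*h) mod d)"
  have arr: "\<forall>r<d. \<forall>s. red_arrow d r s \<longleftrightarrow> s = g r" using red_g[OF od assms(2)] g_def h_def by auto
  have rl: "red_arrow d (d-1) (d-1)" using red_loop[OF od assms(2), of "d-1"] assms by simp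
  then have g1: "g (d-1) = d-1" using arr assms by auto
  have fixp: "\<forall>r<d. g r = r \<longrightarrow> r = d - 1"
  proof (intro allI impI)
    fix r assume r: "r < d" "g r = r"
    then have "red_arrow d r r" using arr by metis
    then show "r = d - 1" using red_loop[OF od assms(2) r(1)] by simp
  qed
  have hd: "(3 * int h)^k = 3^k * int h^k" for k by (simp add: power_mult_distrib)
  have gm: "(g ^^ m) r = d - 1" if r: "r < d" for r
  proof -
    define G where "G = (g ^^ m) r"
    have P: "int d dvd int G + 1 - (3 * int h)^m * (int r + 1)"
      using g_pow[OF od assms(2) r, of m] G_def g_def h_def by simp
    have "int d dvd (3 * int h)^m * (int r + 1)" unfolding hd using assms(1) by simp
    then have "int d dvd (int G + 1 - (3 * int h)^m * (int r + 1)) + (3 * int h)^m * (int r + 1)"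
      using P by (intro dvd_add)
    then have "int d dvd int (G + 1)" by (simp add: add.commute)
    then have dG: "d dvd G + 1" by (simp only: of_nat_dvd_iff)
    have "G < d" unfolding G_def using r g_def assms by (intro funpow_lt) auto
    moreover have "d \<le> G + 1" using dG by (rule dvd_imp_le) simp
    ultimately show ?thesis using G_def by simp
  qed
  have gk: "(g ^^ k) r \<noteq> d - 1" if r: "r < d" "r mod 3 \<noteq> 2" and k: "k < m" for r k
  proof
    assume G: "(g ^^ k) r = d - 1"
    have P: "int d dvd int ((g ^^ k) r) + 1 - (3 * int h)^k * (int r + 1)"
      using g_pow[OF od assms(2) r(1), of k] g_def h_def by simp
    have "int ((g ^^ k) r) + 1 = int d" using G assms by simp
    then have "int d dvd int d - (3 * int h)^k * (int r + 1)" using P by simp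
    then have "int d dvd (3 * int h)^k * (int r + 1)" by (rule dvd_sub_rev)
    moreover have "(3 * int h)^k * (int r + 1) = int (3^k * (h^k * (r+1)))" by (simp add: power_mult_distrib algebra_simps)
    ultimately have "d dvd 3^k * (h^k * (r+1))" by (simp only: of_nat_dvd_iff)
    moreover have "d = 3^k * 3^(m-k)" using assms(1) k by (simp add: power_add[symmetric])
    ultimately have "3^(m-k) dvd h^k * (r+1)" by simp
    moreover have "(3::nat) dvd 3^(m-k)" using k by (cases "m-k") auto
    ultimately have "3 dvd h^k * (r+1)" using dvd_trans by blast
    then have "3 dvd h^k \<or> 3 dvd r + 1" using prime_dvd_mult_iff[of "3::nat" "h^k" "r+1"] by simp
    moreover have "\<not> 3 dvd h^k"
    proof
      assume "3 dvd h^k"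
      then have "3 dvd h" using prime_dvd_power[of 3 h k] by simp
      then show False using h3_not3[OF m1] h_def assms(1) by simp
    qed
    moreover have "\<not> 3 dvd r + 1" using r(2) by presburger
    ultimately show False by blast
  qed
  have leaves: "\<forall>r<d. (\<not> (\<exists>s. red_arrow d s r)) \<longleftrightarrow> r mod 3 \<noteq> 2"
    using b_red3[OF d3 assms(2)] by auto
  show ?thesis
    apply (rule exI[of _ g])
    using arr g1 fixp gm gk leaves by blast
qed


theorem mainTheorem13:
  fixes d :: nat
  assumes "d > 1"
  shows
   \<comment> \<open>(a)\<close>
   "(even d \<longrightarrow> (\<forall>r<d.
        (even r \<longrightarrow> card {s. black_arrow d r s} = 2 \<and> {s. red_arrow d r s} = {}) \<and>
        (odd r \<longrightarrow> card {s. red_arrow d r s} = 2 \<and> {s. black_arrow d r s} = {}))) \<and>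
    (odd d \<longrightarrow> (\<forall>r<d. card {s. black_arrow d r s} = 1 \<and> card {s. red_arrow d r s} = 1)) \<and>
   \<comment> \<open>(b)\<close>
    (3 dvd d \<longrightarrow> (\<forall>r<d.
        (r mod 3 = 2 \<longrightarrow> card {s. black_arrow d s r} = 1 \<and> {s. red_arrow d s r} \<noteq> {}) \<and>
        (r mod 3 \<noteq> 2 \<longrightarrow> card {s. black_arrow d s r} = 1 \<and> {s. red_arrow d s r} = {}))) \<and>
    (\<not> 3 dvd d \<longrightarrow> (\<forall>r<d. card {s. black_arrow d s r} = 1 \<and> card {s. red_arrow d s r} = 1)) \<and>
   \<comment> \<open>(c)\<close>
    (gcd d 6 = 1 \<longrightarrow>
       (\<exists>f. cycles_via (black_arrow d) {..<d} f \<and>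
            (\<forall>r<d. black_arrow d r r \<longleftrightarrow> r = 0) \<and>
            (\<forall>r<d. cycle_len f r dvd ord d 2)) \<and>
       (\<exists>g. cycles_via (red_arrow d) {..<d} g \<and>
            (\<forall>r<d. red_arrow d r r \<longleftrightarrow> r = d - 1) \<and>
            (\<forall>r<d. \<forall>a. [2 * a = 3] (mod d) \<longrightarrow> cycle_len g r dvd ord d a))) \<and>
   \<comment> \<open>(d)\<close>
    (\<forall>m. d = 3 ^ m \<longrightarrow>
       single_cycle (black_arrow d) {r. r < d \<and> coprime r 3} \<and>
       (\<forall>i\<in>{1..m-1}. single_cycle (black_arrow d) {r. r < d \<and> 3 ^ i dvd r \<and> \<not> 3 ^ (i+1) dvd r}) \<and>
       black_arrow d 0 0) \<and>
   \<comment> \<open>(e)\<close>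
    (\<forall>m. d = 3 ^ m \<longrightarrow>
       (\<exists>g. (\<forall>r<d. \<forall>s. red_arrow d r s \<longleftrightarrow> s = g r) \<and>
            g (d - 1) = d - 1 \<and>
            (\<forall>r<d. g r = r \<longrightarrow> r = d - 1) \<and>
            (\<forall>r<d. \<exists>k. (g ^^ k) r = d - 1) \<and>
            (\<forall>r<d. (\<not> (\<exists>s. red_arrow d s r)) \<longleftrightarrow> r mod 3 \<noteq> 2) \<and>
            (\<forall>r<d. r mod 3 \<noteq> 2 \<longrightarrow> (g ^^ m) r = d - 1 \<and> (\<forall>k<m. (g ^^ k) r \<noteq> d - 1))))"
  proof -
  have A1: "even d \<longrightarrow> (\<forall>r<d.
        (even r \<longrightarrow> card {s. black_arrow d r s} = 2 \<and> {s. red_arrow d r s} = {}) \<and>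
        (odd r \<longrightarrow> card {s. red_arrow d r s} = 2 \<and> {s. black_arrow d r s} = {}))"
    using a_even_black_even[of d] a_even_red_even[of d] a_even_red_odd[of d] a_even_black_odd[of d] assms by blast
  have A2: "odd d \<longrightarrow> (\<forall>r<d. card {s. black_arrow d r s} = 1 \<and> card {s. red_arrow d r s} = 1)"
    using a_odd[of d] assms by blast
  have B1: "3 dvd d \<longrightarrow> (\<forall>r<d.
        (r mod 3 = 2 \<longrightarrow> card {s. black_arrow d s r} = 1 \<and> {s. red_arrow d s r} \<noteq> {}) \<and>
        (r mod 3 \<noteq> 2 \<longrightarrow> card {s. black_arrow d s r} = 1 \<and> {s. red_arrow d s r} = {}))"
    using b_black[of d] b_red3[of d] assms by blast
  have B2: "\<not> 3 dvd d \<longrightarrow> (\<forall>r<d. card {s. black_arrow d s r} = 1 \<and> card {s. red_arrow d s r} = 1)"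
    using b_black[of d] b_red_not3[of d] assms by blast
  have C: "gcd d 6 = 1 \<longrightarrow>
       (\<exists>f. cycles_via (black_arrow d) {..<d} f \<and>
            (\<forall>r<d. black_arrow d r r \<longleftrightarrow> r = 0) \<and>
            (\<forall>r<d. cycle_len f r dvd ord d 2)) \<and>
       (\<exists>g. cycles_via (red_arrow d) {..<d} g \<and>
            (\<forall>r<d. red_arrow d r r \<longleftrightarrow> r = d - 1) \<and>
            (\<forall>r<d. \<forall>a. [2 * a = 3] (mod d) \<longrightarrow> cycle_len g r dvd ord d a))"
  proof
    assume g: "gcd d 6 = 1"
    have od: "odd d"
    proof
      assume "even d"
      then have "2 dvd gcd d 6" by (intro gcd_greatest) auto
      then show False using g by simp
    qed
    have n3: "\<not> 3 dvd d"
    proof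
      assume "3 dvd d"
      then have "3 dvd gcd d 6" by (intro gcd_greatest) auto
      then show False using g by simp
    qed
    show "(\<exists>f. cycles_via (black_arrow d) {..<d} f \<and>
            (\<forall>r<d. black_arrow d r r \<longleftrightarrow> r = 0) \<and>
            (\<forall>r<d. cycle_len f r dvd ord d 2)) \<and>
       (\<exists>g. cycles_via (red_arrow d) {..<d} g \<and>
            (\<forall>r<d. red_arrow d r r \<longleftrightarrow> r = d - 1) \<and>
            (\<forall>r<d. \<forall>a. [2 * a = 3] (mod d) \<longrightarrow> cycle_len g r dvd ord d a))"
      using c_black[OF od assms] c_red[OF od assms n3] by blast
  qed
  have D: "\<forall>m. d = 3 ^ m \<longrightarrow>
       single_cycle (black_arrow d) {r. r < d \<and> coprime r 3} \<and>
       (\<forall>i\<in>{1..m-1}. single_cycle (black_arrow d) {r. r < d \<and> 3 ^ i dvd r \<and> \<not> 3 ^ (i+1) dvd r}) \<and>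
       black_arrow d 0 0"
  proof (intro allI impI)
    fix m assume dm: "d = 3 ^ m"
    have m1: "m \<ge> 1" using dm assms by (cases m) auto
    have "{r. r < d \<and> coprime r 3} = {r. r < d \<and> 3^0 dvd r \<and> \<not> 3^(0+1) dvd r}"
      by (auto simp: coprime3_iff)
    moreover have "single_cycle (black_arrow d) {r. r < d \<and> 3^0 dvd r \<and> \<not> 3^(0+1) dvd r}"
      using single_cyc[OF m1 _ dm, of 0] m1 by simp
    ultimately have s0: "single_cycle (black_arrow d) {r. r < d \<and> coprime r 3}" by simp
    have si: "\<forall>i\<in>{1..m-1}. single_cycle (black_arrow d) {r. r < d \<and> 3 ^ i dvd r \<and> \<not> 3 ^ (i+1) dvd r}"
    proof
      fix i assume "i \<in> {1..m-1}"
      then have "i < m" using m1 by auto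
      then show "single_cycle (black_arrow d) {r. r < d \<and> 3 ^ i dvd r \<and> \<not> 3 ^ (i+1) dvd r}"
        using single_cyc[OF m1 _ dm] by blast
    qed
    have "black_arrow d 0 0" using black_loop[OF assms, of 0] assms by simp
    then show "single_cycle (black_arrow d) {r. r < d \<and> coprime r 3} \<and>
       (\<forall>i\<in>{1..m-1}. single_cycle (black_arrow d) {r. r < d \<and> 3 ^ i dvd r \<and> \<not> 3 ^ (i+1) dvd r}) \<and>
       black_arrow d 0 0" using s0 si by blast
  qed
  have E: "\<forall>m. d = 3 ^ m \<longrightarrow>
       (\<exists>g. (\<forall>r<d. \<forall>s. red_arrow d r s \<longleftrightarrow> s = g r) \<and>
            g (d - 1) = d - 1 \<and>
            (\<forall>r<d. g r = r \<longrightarrow> r = d - 1) \<and>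
            (\<forall>r<d. \<exists>k. (g ^^ k) r = d - 1) \<and>
            (\<forall>r<d. (\<not> (\<exists>s. red_arrow d s r)) \<longleftrightarrow> r mod 3 \<noteq> 2) \<and>
            (\<forall>r<d. r mod 3 \<noteq> 2 \<longrightarrow> (g ^^ m) r = d - 1 \<and> (\<forall>k<m. (g ^^ k) r \<noteq> d - 1)))"
    using e_part assms by blast
  show ?thesis using A1 A2 B1 B2 C D E by blast
qed

end
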